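(* With the notation of the context, the functions $d$ and $g$ are $C^1$ on $(-1,1)$, and $d>0$, $g>0$. Moreover $$\lim_{\rho\to1^-}d(\rho)=\lambda e^{-rT}s_0e^{(\nu-\eta\frac{\mu-r}{\sigma}-\frac{\eta^2}{2})T},\qquad \lim_{\rho\to-1^+}d(\rho)=\lambda e^{-rT}s_0e^{(\nu+\eta\frac{\mu-r}{\sigma}-\frac{\eta^2}{2})T},$$ $$\lim_{\rho\to1^-}g(\rho)=\lambda e^{-rT}s_0e^{(\nu-\eta\frac{\mu-r}{\sigma})T},\qquad \lim_{\rho\to-1^+}g(\rho)=\lambda e^{-rT}s_0e^{(\nu+\eta\frac{\mu-r}{\sigma})T}.$$ For all $\rho\in(-1,1)$, $$\left(b(\rho)-\frac{\lambda e^{-rT}}{\theta(\rho)}\frac{w(\rho)^2}{2\eta^4T^2}e_2\right)_+\le a(\rho)\le b(\rho),$$ where $e_2=e^{2\eta^2T}-2(1+\eta^2T)e^{\frac{\eta^2T}{2}}+\eta^2T+1$. Moreover, $a$, $b$, $d$ and $g$ are bounded on $(-1,1)$.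
   Context: Fix $T>0$, $r,\nu,\mu\in\mathbb R$, $\eta>0$, $\sigma>0$, $s_0>0$, $\lambda>0$, $\gamma>0$; $N$ is a standard Gaussian random variable; $W$ is the Lambert function (inverse of $x\in(-1,\infty)\mapsto xe^x$). For $\rho\in(-1,1)$ define $\theta(\rho)=\lambda\gamma(1-\rho^2)$, $$w(\rho)=W\left(s_0\eta^2Te^{(\nu-\eta\rho\frac{\mu-r}{\sigma}-\frac{\eta^2}{2})T}\theta(\rho)\right),\qquad d(\rho)=\frac{\lambda e^{-rT}}{\theta(\rho)\eta^2T}\,w(\rho)\left(1+\frac{w(\rho)}{2}\right),$$ $$a(\rho)=-\frac{\lambda e^{-rT}}{\theta(\rho)}\ln\mathbb E\left(\exp\left(-\frac{w(\rho)}{\eta^2T}\left(e^{\eta\sqrt TN}-1-\eta\sqrt TN\right)\right)\right),\qquad b(\rho)=\frac{\lambda e^{-rT}}{\theta(\rho)}\frac{w(\rho)}{\eta^2T}\left(e^{\frac{\eta^2}{2}T}-1\right),$$ $$g(\rho)=d(\rho)+b(\rho)=\frac{\lambda e^{-rT}}{\theta(\rho)}\frac{w(\rho)}{\eta^2T}\left(e^{\frac{\eta^2}{2}T}+\frac{w(\rho)}{2}\right).$$ $x_+=\max(x,0)$. *)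

theory Defs
  imports "HOL-Probability.Probability"
begin

definition lambertW :: "real \<Rightarrow> real" where
  "lambertW y = (THE x. x > -1 \<and> x * exp x = y)"

definition gauss_expect :: "(real \<Rightarrow> real) \<Rightarrow> real" where
  "gauss_expect f = (LINT x|lborel. std_normal_density x * f x)"

end

theory Submission
  imports Defs
begin

lemma xexp_strict_mono:
  fixes x1 x2 :: real
  assumes "-1 < x1" "x1 < x2"
  shows "x1 * exp x1 < x2 * exp x2"
proof -
  have "\<forall>x. x1 \<le> x \<and> x \<le> x2 \<longrightarrow> (\<exists>y. DERIV (\<lambda>x. x * exp x) x :> y \<and> 0 < y)"
  proof (intro allI impI)
    fix x assume "x1 \<le> x \<and> x \<le> x2"
    hence "x > -1" using assms by auto
    have "DERIV (\<lambda>x. x * exp x) x :> (1 * exp x + x * exp x)"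
      by (auto intro!: derivative_eq_intros)
    moreover have "0 < 1 * exp x + x * exp x"
      proof -
      have "1 * exp x + x * exp x = (1 + x) * exp x" by (simp add: algebra_simps)
      moreover have "0 < (1 + x) * exp x" using \<open>x > -1\<close> by simp
      ultimately show ?thesis by simp
    qed
    ultimately show "\<exists>y. DERIV (\<lambda>x. x * exp x) x :> y \<and> 0 < y" by blast
  qed
  thus ?thesis using DERIV_pos_imp_increasing[OF assms(2)] by blast
qed

lemma xexp_inj:
  fixes x1 x2 :: real
  assumes "-1 < x1" "-1 < x2" "x1 * exp x1 = x2 * exp x2"
  shows "x1 = x2"
proof (rule linorder_cases[of x1 x2])
  assume "x1 < x2" thus ?thesis using xexp_strict_mono[of x1 x2] assms by simp
next
  assume "x2 < x1" thus ?thesis using xexp_strict_mono[of x2 x1] assms by simp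
qed

lemma lambertW_ex:
  fixes y :: real assumes "0 \<le> y"
  shows "\<exists>x. 0 \<le> x \<and> x \<le> y \<and> x * exp x = y"
proof -
  have "0 * exp 0 \<le> y" using assms by simp
  moreover have "y \<le> y * exp y" using assms by (simp add: mult_le_cancel_left1)
  moreover have "\<forall>x. 0 \<le> x \<and> x \<le> y \<longrightarrow> isCont (\<lambda>x. x * exp x) x"
    by (intro allI impI continuous_intros)
  ultimately show ?thesis using IVT[of "\<lambda>x. x * exp x" 0 y y] assms by blast
qed

lemma lambertW_eq:
  fixes y x :: real assumes "-1 < x" "x * exp x = y"
  shows "lambertW y = x"
  unfolding lambertW_def
  using assms xexp_inj by (intro the_equality) auto

lemma lambertW_props:
  fixes y :: real assumes "0 \<le> y"
  shows "0 \<le> lambertW y" "lambertW y \<le> y" "lambertW y * exp (lambertW y) = y"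
proof -
  obtain x where x: "0 \<le> x" "x \<le> y" "x * exp x = y" using lambertW_ex[OF assms] by blast
  have "lambertW y = x" using x by (intro lambertW_eq) auto
  thus "0 \<le> lambertW y" "lambertW y \<le> y" "lambertW y * exp (lambertW y) = y" using x by auto
qed

lemma lambertW_pos:
  fixes y :: real assumes "0 < y"
  shows "0 < lambertW y"
  using lambertW_props[of y] assms by (metis less_eq_real_def mult_zero_left)

lemma lambertW_deriv:
  fixes y :: real assumes "0 < y"
  shows "DERIV lambertW y :> inverse ((1 + lambertW y) * exp (lambertW y))"
proof -
  let ?f = "\<lambda>x::real. x * exp x"
  define x where "x = lambertW y"
  have x0: "0 < x" using lambertW_pos[OF assms] x_def by simp
  have fx: "?f x = y" using lambertW_props[of y] assms x_def by simp
  have inv: "lambertW (?f z) = z" if "z > -1" for z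
    using that by (intro lambertW_eq) auto
  have "isCont lambertW (?f x)"
  proof (rule isCont_inverse_function[where d="x/2" and f="\<lambda>x. x * exp x" and x=x])
    show "0 < x/2" using x0 by simp
  next
    fix z :: real assume "\<bar>z - x\<bar> \<le> x/2"
    hence "z > -1" using x0 by linarith
    thus "lambertW (z * exp z) = z" by (rule inv)
  next
    fix z :: real
    show "isCont (\<lambda>x. x * exp x) z" by (intro continuous_intros)
  qed
  hence cont: "isCont lambertW y" using fx by simp
  have der0: "DERIV ?f (lambertW y) :> (1 * exp (lambertW y) + lambertW y * exp (lambertW y))"
    by (auto intro!: derivative_eq_intros)
  have der: "DERIV ?f (lambertW y) :> ((1 + lambertW y) * exp (lambertW y))"
    using der0 by (simp add: algebra_simps)
  show ?thesis
  proof (rule DERIV_inverse_function[OF der _ _ _ _ cont, where a=0 and b="y+1"])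
    show "(1 + lambertW y) * exp (lambertW y) \<noteq> 0" using x0 x_def by simp
    show "0 < y" "y < y + 1" using assms by auto
    fix z :: real assume "0 < z" "z < y + 1"
    thus "lambertW z * exp (lambertW z) = z" using lambertW_props[of z] by simp
  qed
qed

lemma lambertW_cont: "continuous_on {0<..} lambertW"
  by (intro continuous_at_imp_continuous_on ballI DERIV_isCont[OF lambertW_deriv]) simp


lemma hb_eq:
  assumes "has_bochner_integral M f x" "\<And>y. f y = g y" "x = z"
  shows "has_bochner_integral M g z"
  using assms has_bochner_integral_cong[of M M f g x z] by simp

lemma phi_exp: "std_normal_density x * exp (t * x) = exp (t^2/2) * normal_density t 1 x"
proof -
  have "- x\<^sup>2 / 2 + t * x = t^2/2 + (- (x - t)\<^sup>2 / 2)" by (simp add: power2_eq_square field_simps)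
  hence "exp (- x\<^sup>2 / 2) * exp (t * x) = exp (t^2/2) * exp (- (x - t)\<^sup>2 / 2)"
    by (metis exp_add)
  thus ?thesis unfolding std_normal_density_def normal_density_def by simp
qed

lemma HB1: "has_bochner_integral lborel (\<lambda>x. std_normal_density x) 1"
  using has_bochner_integral_integral_eq integrable_normal_density integral_normal_density
  by (metis has_bochner_integral_iff zero_less_one)

lemma HBe: "has_bochner_integral lborel (\<lambda>x. std_normal_density x * exp (t * x)) (exp (t^2/2))"
proof -
  have "has_bochner_integral lborel (normal_density t 1) 1"
    by (simp add: has_bochner_integral_iff)
  hence "has_bochner_integral lborel (\<lambda>x. exp (t^2/2) * normal_density t 1 x) (exp (t^2/2) * 1)"
    by (intro has_bochner_integral_mult_right)
  thus ?thesis by (rule hb_eq) (simp_all add: phi_exp)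
qed

lemma HBxe: "has_bochner_integral lborel (\<lambda>x. std_normal_density x * (x * exp (t * x))) (t * exp (t^2/2))"
proof -
  have "has_bochner_integral lborel (\<lambda>x. normal_density t 1 x * x) t"
    using normal_moment_nz_1[of 1 t] by simp
  hence "has_bochner_integral lborel (\<lambda>x. exp (t^2/2) * (normal_density t 1 x * x)) (exp (t^2/2) * t)"
    by (intro has_bochner_integral_mult_right)
  thus ?thesis
  proof (rule hb_eq)
    fix y
    have "std_normal_density y * (y * exp (t * y)) = (std_normal_density y * exp (t * y)) * y"
      by (simp add: ac_simps)
    also have "\<dots> = exp (t^2/2) * (normal_density t 1 y * y)" by (simp only: phi_exp mult.assoc)
    finally show "exp (t^2/2) * (normal_density t 1 y * y) = std_normal_density y * (y * exp (t * y))"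
      by (rule sym)
  qed simp
qed

lemma HBx: "has_bochner_integral lborel (\<lambda>x. std_normal_density x * x) 0"
  using std_normal_moment_odd[of 0] by simp

lemma HBx2: "has_bochner_integral lborel (\<lambda>x. std_normal_density x * x^2) 1"
  using std_normal_moment_even[of 1] by simp

lemma HBZ: "has_bochner_integral lborel
   (\<lambda>x. std_normal_density x * (exp (s * x) - 1 - s * x)) (exp (s^2/2) - 1)"
proof -
  have "has_bochner_integral lborel
     (\<lambda>x. std_normal_density x * exp (s * x) - std_normal_density x - s * (std_normal_density x * x))
     (exp (s^2/2) - 1 - s * 0)"
    by (intro has_bochner_integral_diff has_bochner_integral_mult_right HBe HB1 HBx)
  thus ?thesis by (rule hb_eq) (simp_all add: algebra_simps)
qed

definition e2f :: "real \<Rightarrow> real" where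
  "e2f s = exp (2 * s^2) - 2 * (1 + s^2) * exp (s^2 / 2) + s^2 + 1"

lemma HBZ2: "has_bochner_integral lborel
   (\<lambda>x. std_normal_density x * (exp (s * x) - 1 - s * x)^2) (e2f s)"
proof -
  have "has_bochner_integral lborel
     (\<lambda>x. std_normal_density x * exp ((2 * s) * x) + std_normal_density x
        + s^2 * (std_normal_density x * x^2) - 2 * (std_normal_density x * exp (s * x))
        - (2 * s) * (std_normal_density x * (x * exp (s * x))) + (2 * s) * (std_normal_density x * x))
     (exp ((2 * s)^2/2) + 1 + s^2 * 1 - 2 * exp (s^2/2) - (2 * s) * (s * exp (s^2/2)) + (2 * s) * 0)"
    by (intro has_bochner_integral_diff has_bochner_integral_add has_bochner_integral_mult_right
        HBe HB1 HBx HBx2 HBxe)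
  thus ?thesis
  proof (rule hb_eq)
    fix y
    have sq: "exp (2 * s * y) = exp (s * y) * exp (s * y)" by (simp add: exp_add[symmetric])
    show "std_normal_density y * exp (2 * s * y) + std_normal_density y
        + s^2 * (std_normal_density y * y^2) - 2 * (std_normal_density y * exp (s * y))
        - 2 * s * (std_normal_density y * (y * exp (s * y))) + 2 * s * (std_normal_density y * y)
        = std_normal_density y * (exp (s * y) - 1 - s * y)^2"
      unfolding sq by (simp add: power2_eq_square algebra_simps)
  next
    show "exp ((2 * s)^2/2) + 1 + s^2 * 1 - 2 * exp (s^2/2) - 2 * s * (s * exp (s^2/2)) + 2 * s * 0 = e2f s"
      by (simp add: e2f_def power2_eq_square algebra_simps)
  qed
qed


lemma exp_neg_quad:
  fixes u :: real assumes "0 \<le> u"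
  shows "exp (-u) \<le> 1 - u + u^2/2"
proof -
  let ?f = "\<lambda>u::real. 1 - u + u^2/2 - exp (-u)"
  have "?f 0 \<le> ?f u"
  proof (rule DERIV_nonneg_imp_increasing_open[OF assms])
    fix x :: real assume "0 < x" "x < u"
    have "DERIV ?f x :> (- 1 + x + exp (-x))"
      by (auto intro!: derivative_eq_intros simp: algebra_simps)
    moreover have "0 \<le> - 1 + x + exp (-x)"
      using exp_ge_add_one_self[of "-x"] by simp
    ultimately show "\<exists>y. DERIV ?f x :> y \<and> y \<ge> 0" by blast
  next
    show "continuous_on {0..u} ?f" by (intro continuous_intros) auto
  qed
  thus ?thesis by simp
qed

lemma exp_tangent:
  fixes v c :: real
  shows "exp c * (1 + v - c) \<le> exp v"
proof -
  have "exp c * (1 + (v - c)) \<le> exp c * exp (v - c)"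
    using exp_ge_add_one_self[of "v - c"] by (intro mult_left_mono) auto
  also have "\<dots> = exp v" by (simp add: exp_diff)
  finally show ?thesis by (simp only: add_diff_eq)
qed

lemma gauss_main:
  fixes k s :: real assumes k: "0 \<le> k"
  defines "E \<equiv> gauss_expect (\<lambda>x. exp (- k * (exp (s * x) - 1 - s * x)))"
  shows "0 < E" "E \<le> 1" "- k * (exp (s^2/2) - 1) \<le> ln E"
    "ln E \<le> - k * (exp (s^2/2) - 1) + k^2/2 * e2f s"
proof -
  define Z where "Z x = exp (s * x) - 1 - s * x" for x
  define mu where "mu = exp (s^2/2) - 1"
  define F where "F x = std_normal_density x * exp (- k * Z x)" for x
  have Z0: "0 \<le> Z x" for x unfolding Z_def using exp_ge_add_one_self[of "s * x"] by linarith
  have E_def': "E = integral\<^sup>L lborel F"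
    unfolding E_def gauss_expect_def F_def Z_def by simp
  have HZ: "has_bochner_integral lborel (\<lambda>x. std_normal_density x * Z x) mu"
    unfolding Z_def mu_def by (rule HBZ)
  have HZ2: "has_bochner_integral lborel (\<lambda>x. std_normal_density x * (Z x)^2) (e2f s)"
    unfolding Z_def by (rule HBZ2)
  have Fle: "F x \<le> std_normal_density x" for x
  proof -
    have "exp (- k * Z x) \<le> 1" using Z0[of x] k by (simp add: mult_nonneg_nonneg)
    thus ?thesis unfolding F_def by (simp add: mult_left_le)
  qed
  have F0: "0 \<le> F x" for x unfolding F_def by simp
  have intF: "integrable lborel F"
  proof (rule Bochner_Integration.integrable_bound[where f=std_normal_density])
    show "integrable lborel std_normal_density" by simp
    show "F \<in> borel_measurable lborel" unfolding F_def Z_def by measurable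
    show "AE x in lborel. norm (F x) \<le> norm (std_normal_density x)"
      using Fle F0 by (intro AE_I2) simp
  qed
  show "E \<le> 1"
  proof -
    have "integral\<^sup>L lborel F \<le> integral\<^sup>L lborel std_normal_density"
      by (rule integral_mono[OF intF]) (use Fle in auto)
    thus ?thesis using E_def' by simp
  qed
  define c where "c = exp (- k * mu)"
  have Hlow: "has_bochner_integral lborel
      (\<lambda>x. (c * (1 + k * mu)) * std_normal_density x - (c * k) * (std_normal_density x * Z x))
      ((c * (1 + k * mu)) * 1 - (c * k) * mu)"
    by (intro has_bochner_integral_diff has_bochner_integral_mult_right HB1 HZ)
  have "(c * (1 + k * mu)) * 1 - (c * k) * mu = c" by (simp add: algebra_simps)
  hence "c = integral\<^sup>L lborel
      (\<lambda>x. (c * (1 + k * mu)) * std_normal_density x - (c * k) * (std_normal_density x * Z x))"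
    using has_bochner_integral_integral_eq[OF Hlow] by simp
  also have "\<dots> \<le> integral\<^sup>L lborel F"
  proof (rule integral_mono)
    show "integrable lborel
      (\<lambda>x. (c * (1 + k * mu)) * std_normal_density x - (c * k) * (std_normal_density x * Z x))"
      using Hlow by (rule integrable.intros)
    show "integrable lborel F" by (rule intF)
    fix x
    have "c * (1 + (- k * Z x) - (- k * mu)) \<le> exp (- k * Z x)"
      unfolding c_def by (rule exp_tangent)
    hence "std_normal_density x * (c * (1 + (- k * Z x) - (- k * mu))) \<le> std_normal_density x * exp (- k * Z x)"
      by (intro mult_left_mono) auto
    thus "(c * (1 + k * mu)) * std_normal_density x - (c * k) * (std_normal_density x * Z x) \<le> F x"
      unfolding F_def by (simp add: algebra_simps)
  qed
  finally have cE: "c \<le> E" using E_def' by simp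
  have c0: "0 < c" unfolding c_def by simp
  show E0: "0 < E" using cE c0 by simp
  show "- k * (exp (s^2/2) - 1) \<le> ln E"
    using cE E0 unfolding c_def mu_def by (simp add: ln_ge_iff)
  have Hup: "has_bochner_integral lborel
      (\<lambda>x. std_normal_density x - k * (std_normal_density x * Z x) + (k^2/2) * (std_normal_density x * (Z x)^2))
      (1 - k * mu + (k^2/2) * e2f s)"
    by (intro has_bochner_integral_diff has_bochner_integral_add has_bochner_integral_mult_right HB1 HZ HZ2)
  have "integral\<^sup>L lborel F \<le> integral\<^sup>L lborel
      (\<lambda>x. std_normal_density x - k * (std_normal_density x * Z x) + (k^2/2) * (std_normal_density x * (Z x)^2))"
  proof (rule integral_mono)
    show "integrable lborel
      (\<lambda>x. std_normal_density x - k * (std_normal_density x * Z x) + (k^2/2) * (std_normal_density x * (Z x)^2))"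
      using Hup by (rule integrable.intros)
    show "integrable lborel F" by (rule intF)
    fix x
    have "exp (- (k * Z x)) \<le> 1 - k * Z x + (k * Z x)^2/2"
      using Z0[of x] k by (intro exp_neg_quad) simp
    hence "std_normal_density x * exp (- (k * Z x)) \<le> std_normal_density x * (1 - k * Z x + (k * Z x)^2/2)"
      by (intro mult_left_mono) auto
    thus "F x \<le> std_normal_density x - k * (std_normal_density x * Z x) + (k^2/2) * (std_normal_density x * (Z x)^2)"
      unfolding F_def by (simp add: algebra_simps power2_eq_square)
  qed
  also have "\<dots> = 1 - k * mu + (k^2/2) * e2f s"
    by (rule has_bochner_integral_integral_eq[OF Hup])
  finally have "E \<le> 1 - k * mu + (k^2/2) * e2f s" using E_def' by simp
  moreover have "ln E \<le> E - 1" using E0 by (rule ln_le_minus_one)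
  ultimately show "ln E \<le> - k * (exp (s^2/2) - 1) + k^2/2 * e2f s"
    unfolding mu_def by (simp add: algebra_simps)
qed


lemma C1_of_deriv:
  fixes f :: "real \<Rightarrow> real"
  assumes "\<And>x. x \<in> S \<Longrightarrow> (f has_real_derivative f' x) (at x)" "continuous_on S f'"
  shows "f C1_differentiable_on S"
  unfolding C1_differentiable_on_def
  using assms has_real_derivative_iff_has_vector_derivative by blast

theorem lemma2:
  fixes T r \<nu> \<mu> \<eta> \<sigma> s0 lam \<gamma> :: real
    and \<theta> w d a b g :: "real \<Rightarrow> real"
  assumes "T > 0" "\<eta> > 0" "\<sigma> > 0" "s0 > 0" "lam > 0" "\<gamma> > 0"
  defines "\<theta> \<equiv> \<lambda>\<rho>. lam * \<gamma> * (1 - \<rho>^2)"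
  defines "w \<equiv> \<lambda>\<rho>. lambertW (s0 * \<eta>^2 * T *
              exp ((\<nu> - \<eta> * \<rho> * ((\<mu> - r) / \<sigma>) - \<eta>^2 / 2) * T) * \<theta> \<rho>)"
  defines "d \<equiv> \<lambda>\<rho>. lam * exp (- r * T) / (\<theta> \<rho> * \<eta>^2 * T) * w \<rho> * (1 + w \<rho> / 2)"
  defines "a \<equiv> \<lambda>\<rho>. - (lam * exp (- r * T) / \<theta> \<rho>) *
              ln (gauss_expect (\<lambda>x. exp (- (w \<rho> / (\<eta>^2 * T)) *
                   (exp (\<eta> * sqrt T * x) - 1 - \<eta> * sqrt T * x))))"
  defines "b \<equiv> \<lambda>\<rho>. lam * exp (- r * T) / \<theta> \<rho> * (w \<rho> / (\<eta>^2 * T)) * (exp (\<eta>^2 / 2 * T) - 1)"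
  defines "g \<equiv> \<lambda>\<rho>. d \<rho> + b \<rho>"
  shows "d C1_differentiable_on {-1<..<1} \<and> g C1_differentiable_on {-1<..<1}
    \<and> (\<forall>\<rho>\<in>{-1<..<1}. d \<rho> > 0 \<and> g \<rho> > 0)
    \<and> (d \<longlongrightarrow> lam * exp (- r * T) * s0 * exp ((\<nu> - \<eta> * ((\<mu> - r) / \<sigma>) - \<eta>^2 / 2) * T)) (at_left 1)
    \<and> (d \<longlongrightarrow> lam * exp (- r * T) * s0 * exp ((\<nu> + \<eta> * ((\<mu> - r) / \<sigma>) - \<eta>^2 / 2) * T)) (at_right (-1))
    \<and> (g \<longlongrightarrow> lam * exp (- r * T) * s0 * exp ((\<nu> - \<eta> * ((\<mu> - r) / \<sigma>)) * T)) (at_left 1)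
    \<and> (g \<longlongrightarrow> lam * exp (- r * T) * s0 * exp ((\<nu> + \<eta> * ((\<mu> - r) / \<sigma>)) * T)) (at_right (-1))
    \<and> (\<forall>\<rho>\<in>{-1<..<1}.
         max (b \<rho> - lam * exp (- r * T) / \<theta> \<rho> * (w \<rho>^2 / (2 * \<eta>^4 * T^2)) *
               (exp (2 * \<eta>^2 * T) - 2 * (1 + \<eta>^2 * T) * exp (\<eta>^2 * T / 2) + \<eta>^2 * T + 1)) 0
           \<le> a \<rho> \<and> a \<rho> \<le> b \<rho>)
    \<and> bounded (a ` {-1<..<1}) \<and> bounded (b ` {-1<..<1})
    \<and> bounded (d ` {-1<..<1}) \<and> bounded (g ` {-1<..<1})"
proof -
  note pos = assms(1-6)
  define S :: "real set" where "S = {-1<..<1}"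
  define m where "m = (\<mu> - r) / \<sigma>"
  define C where "C = lam * exp (- r * T)"
  define K where "K = C / (\<eta>^2 * T)"
  define ee where "ee = exp (\<eta>^2 / 2 * T)"
  define A where "A = (\<lambda>\<rho>. s0 * \<eta>^2 * T * exp ((\<nu> - \<eta> * \<rho> * m - \<eta>^2 / 2) * T))"
  define X where "X = (\<lambda>\<rho>. A \<rho> * \<theta> \<rho>)"
  have C0: "C > 0" unfolding C_def using pos by simp
  have K0: "K > 0" unfolding K_def using C0 pos by simp
  have ee1: "ee > 1" unfolding ee_def using pos by simp
  have A0: "A \<rho> > 0" for \<rho> unfolding A_def using pos by simp
  have w_eq: "w \<rho> = lambertW (X \<rho>)" for \<rho> unfolding w_def X_def A_def m_def by simp
  have th0: "\<theta> \<rho> > 0" if "\<rho> \<in> S" for \<rho>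
  proof -
    have "\<rho>^2 < 1" using that unfolding S_def by (simp add: abs_square_less_1 abs_less_iff)
    thus ?thesis unfolding \<theta>_def using pos by simp
  qed
  have X0: "X \<rho> > 0" if "\<rho> \<in> S" for \<rho> unfolding X_def using A0 th0[OF that] by simp
  have w0: "w \<rho> > 0" if "\<rho> \<in> S" for \<rho> using w_eq lambertW_pos X0[OF that] by simp
  have wfix: "w \<rho> * exp (w \<rho>) = X \<rho>" if "\<rho> \<in> S" for \<rho>
    using w_eq lambertW_props(3) X0[OF that] by simp
  have wle: "w \<rho> \<le> X \<rho>" if "\<rho> \<in> S" for \<rho>
    using w_eq lambertW_props(2) X0[OF that] by simp
  have wdiv: "w \<rho> / \<theta> \<rho> = A \<rho> * exp (- w \<rho>)" if "\<rho> \<in> S" for \<rho>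
  proof -
    have "A \<rho> * \<theta> \<rho> * exp (- w \<rho>) = w \<rho> * (exp (w \<rho>) * exp (- w \<rho>))"
      using wfix[OF that] unfolding X_def by (simp add: mult.assoc)
    also have "\<dots> = w \<rho>" by (simp add: exp_minus)
    finally show ?thesis using th0[OF that] by (simp add: field_simps)
  qed
  have d_eq: "d \<rho> = K * A \<rho> * exp (- w \<rho>) * (1 + w \<rho> / 2)" if "\<rho> \<in> S" for \<rho>
  proof -
    have "d \<rho> = K * (w \<rho> / \<theta> \<rho>) * (1 + w \<rho> / 2)"
      unfolding d_def K_def C_def using th0[OF that] pos by (simp add: field_simps)
    thus ?thesis using wdiv[OF that] by simp
  qed
  have b_eq: "b \<rho> = K * A \<rho> * exp (- w \<rho>) * (ee - 1)" if "\<rho> \<in> S" for \<rho>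
  proof -
    have "b \<rho> = K * (w \<rho> / \<theta> \<rho>) * (ee - 1)"
      unfolding b_def K_def C_def ee_def using th0[OF that] pos by (simp add: field_simps)
    thus ?thesis using wdiv[OF that] by simp
  qed
  have g_eq: "g \<rho> = K * A \<rho> * exp (- w \<rho>) * (w \<rho> / 2 + ee)" if "\<rho> \<in> S" for \<rho>
    unfolding g_def using d_eq[OF that] b_eq[OF that] by (simp add: algebra_simps)

  have dpos: "d \<rho> > 0" if "\<rho> \<in> S" for \<rho>
    using d_eq[OF that] K0 A0[of \<rho>] w0[OF that] by simp
  have bpos: "b \<rho> > 0" if "\<rho> \<in> S" for \<rho>
    using b_eq[OF that] K0 A0[of \<rho>] ee1 by simp
  have gpos: "g \<rho> > 0" if "\<rho> \<in> S" for \<rho>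
    unfolding g_def using dpos[OF that] bpos[OF that] by simp

  have lim_gen: "(d \<longlongrightarrow> K * A p) F \<and> (g \<longlongrightarrow> K * A p * ee) F"
    if ev: "eventually (\<lambda>\<rho>. \<rho> \<in> S) F" and idl: "((\<lambda>\<rho>. \<rho>) \<longlongrightarrow> p) F" and p: "p^2 = 1" for F p
  proof -
    have "(X \<longlongrightarrow> A p * \<theta> p) F"
      unfolding X_def A_def \<theta>_def by (intro tendsto_intros idl)
    moreover have "\<theta> p = 0" unfolding \<theta>_def using p by simp
    ultimately have Xl: "(X \<longlongrightarrow> 0) F" by simp
    have wl: "(w \<longlongrightarrow> 0) F"
    proof (rule tendsto_sandwich[of "\<lambda>_. 0" w F X])
      show "eventually (\<lambda>n. 0 \<le> w n) F" using ev by (rule eventually_mono) (use w0 in force)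
      show "eventually (\<lambda>n. w n \<le> X n) F" using ev by (rule eventually_mono) (use wle in force)
    qed (auto intro: Xl)
    have Al: "(A \<longlongrightarrow> A p) F" unfolding A_def by (intro tendsto_intros idl)
    have "((\<lambda>\<rho>. K * A \<rho> * exp (- w \<rho>) * (1 + w \<rho> / 2)) \<longlongrightarrow> K * A p * exp (- 0) * (1 + 0 / 2)) F"
      by (intro tendsto_intros Al wl) simp
    hence l1: "((\<lambda>\<rho>. K * A \<rho> * exp (- w \<rho>) * (1 + w \<rho> / 2)) \<longlongrightarrow> K * A p) F" by simp
    have "((\<lambda>\<rho>. K * A \<rho> * exp (- w \<rho>) * (w \<rho> / 2 + ee)) \<longlongrightarrow> K * A p * exp (- 0) * (0 / 2 + ee)) F"
      by (intro tendsto_intros Al wl) simp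
    hence l2: "((\<lambda>\<rho>. K * A \<rho> * exp (- w \<rho>) * (w \<rho> / 2 + ee)) \<longlongrightarrow> K * A p * ee) F" by simp
    have "(d \<longlongrightarrow> K * A p) F"
      by (rule Lim_transform_eventually[OF l1]) (use ev in \<open>auto elim: eventually_mono simp: d_eq\<close>)
    moreover have "(g \<longlongrightarrow> K * A p * ee) F"
      by (rule Lim_transform_eventually[OF l2]) (use ev in \<open>auto elim: eventually_mono simp: g_eq\<close>)
    ultimately show ?thesis by blast
  qed
  have evl: "eventually (\<lambda>\<rho>. \<rho> \<in> S) (at_left 1)"
    unfolding S_def by (rule eventually_at_left_real) simp
  have evr: "eventually (\<lambda>\<rho>. \<rho> \<in> S) (at_right (-1))"
    unfolding S_def by (rule eventually_at_right_real) simp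
  have LL: "(d \<longlongrightarrow> K * A 1) (at_left 1) \<and> (g \<longlongrightarrow> K * A 1 * ee) (at_left 1)"
    by (rule lim_gen[OF evl]) simp_all
  have LR: "(d \<longlongrightarrow> K * A (-1)) (at_right (-1)) \<and> (g \<longlongrightarrow> K * A (-1) * ee) (at_right (-1))"
    by (rule lim_gen[OF evr]) simp_all
  have KA1: "K * A 1 = lam * exp (- r * T) * s0 * exp ((\<nu> - \<eta> * ((\<mu> - r) / \<sigma>) - \<eta>^2 / 2) * T)"
    unfolding K_def C_def A_def m_def using pos by (simp add: field_simps)
  have KAm1: "K * A (-1) = lam * exp (- r * T) * s0 * exp ((\<nu> + \<eta> * ((\<mu> - r) / \<sigma>) - \<eta>^2 / 2) * T)"
    unfolding K_def C_def A_def m_def using pos by (simp add: field_simps)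
  have ex1: "exp ((\<nu> - \<eta> * ((\<mu> - r) / \<sigma>) - \<eta>^2 / 2) * T) * ee = exp ((\<nu> - \<eta> * ((\<mu> - r) / \<sigma>)) * T)"
    unfolding ee_def mult_exp_exp by (simp add: algebra_simps)
  have ex2: "exp ((\<nu> + \<eta> * ((\<mu> - r) / \<sigma>) - \<eta>^2 / 2) * T) * ee = exp ((\<nu> + \<eta> * ((\<mu> - r) / \<sigma>)) * T)"
    unfolding ee_def mult_exp_exp by (simp add: algebra_simps)
  have KA1e: "K * A 1 * ee = lam * exp (- r * T) * s0 * exp ((\<nu> - \<eta> * ((\<mu> - r) / \<sigma>)) * T)"
    unfolding KA1 using ex1 by (simp add: mult.assoc)
  have KAm1e: "K * A (-1) * ee = lam * exp (- r * T) * s0 * exp ((\<nu> + \<eta> * ((\<mu> - r) / \<sigma>)) * T)"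
    unfolding KAm1 using ex2 by (simp add: mult.assoc)

  define e2 where "e2 = exp (2 * \<eta>^2 * T) - 2 * (1 + \<eta>^2 * T) * exp (\<eta>^2 * T / 2) + \<eta>^2 * T + 1"
  have s2: "(\<eta> * sqrt T)^2 = \<eta>^2 * T" using pos by (simp add: power_mult_distrib)
  have es: "exp ((\<eta> * sqrt T)^2 / 2) = exp (\<eta>^2 / 2 * T)" unfolding s2 by simp
  have e2s: "e2f (\<eta> * sqrt T) = e2" unfolding e2f_def e2_def s2 by (simp add: mult.assoc)
  have ineq: "max (b \<rho> - lam * exp (- r * T) / \<theta> \<rho> * (w \<rho>^2 / (2 * \<eta>^4 * T^2)) * e2) 0 \<le> a \<rho>
      \<and> a \<rho> \<le> b \<rho> \<and> 0 \<le> a \<rho>" if "\<rho> \<in> S" for \<rho>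
  proof -
    define k where "k = w \<rho> / (\<eta>^2 * T)"
    define q where "q = lam * exp (- r * T) / \<theta> \<rho>"
    define E where "E = gauss_expect (\<lambda>x. exp (- k * (exp ((\<eta> * sqrt T) * x) - 1 - (\<eta> * sqrt T) * x)))"
    define L where "L = ln E"
    have k0: "0 \<le> k" unfolding k_def using w0[OF that] pos by simp
    have q0: "0 < q" unfolding q_def using th0[OF that] pos by simp
    have aL: "a \<rho> = - q * L" unfolding a_def q_def L_def E_def k_def by simp
    have bq: "b \<rho> = q * k * (ee - 1)" unfolding b_def q_def k_def ee_def by simp
    have kk: "w \<rho>^2 / (2 * \<eta>^4 * T^2) = k^2 / 2" unfolding k_def by (simp add: power_divide power_mult_distrib)
    have G1: "0 < E" "E \<le> 1" using gauss_main(1,2)[OF k0, of "\<eta> * sqrt T"] unfolding E_def by auto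
    have G2: "- k * (ee - 1) \<le> L" using gauss_main(3)[OF k0, of "\<eta> * sqrt T"]
      unfolding L_def E_def es ee_def by simp
    have G3: "L \<le> - k * (ee - 1) + k^2/2 * e2" using gauss_main(4)[OF k0, of "\<eta> * sqrt T"]
      unfolding L_def E_def es ee_def e2s by simp
    have L0: "L \<le> 0" unfolding L_def using G1 by simp
    have "a \<rho> \<le> b \<rho>"
    proof -
      have "q * (- L) \<le> q * (k * (ee - 1))" using G2 q0 by (intro mult_left_mono) auto
      thus ?thesis unfolding aL bq by (simp add: algebra_simps)
    qed
    moreover have "0 \<le> a \<rho>" unfolding aL using q0 L0 by (simp add: mult_nonneg_nonpos2 mult_le_0_iff)
    moreover have "b \<rho> - lam * exp (- r * T) / \<theta> \<rho> * (w \<rho>^2 / (2 * \<eta>^4 * T^2)) * e2 \<le> a \<rho>"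
    proof -
      have "q * L \<le> q * (- k * (ee - 1) + k^2/2 * e2)" using G3 q0 by (intro mult_left_mono) auto
      thus ?thesis unfolding aL bq kk q_def[symmetric] by (simp add: algebra_simps)
    qed
    ultimately show ?thesis by simp
  qed

  define Amax where "Amax = s0 * \<eta>^2 * T * exp ((\<nu> + \<eta> * \<bar>m\<bar> - \<eta>^2 / 2) * T)"
  have Ale: "A \<rho> \<le> Amax" if "\<rho> \<in> S" for \<rho>
  proof -
    have "- (\<rho> * m) \<le> \<bar>m\<bar>"
    proof -
      have "- (\<rho> * m) \<le> \<bar>\<rho> * m\<bar>" by simp
      also have "\<dots> = \<bar>\<rho>\<bar> * \<bar>m\<bar>" by (simp add: abs_mult)
      also have "\<dots> \<le> 1 * \<bar>m\<bar>" using that unfolding S_def by (intro mult_right_mono) auto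
      finally show ?thesis by simp
    qed
    hence "\<eta> * (- (\<rho> * m)) \<le> \<eta> * \<bar>m\<bar>" using pos by (intro mult_left_mono) auto
    hence "(\<nu> - \<eta> * \<rho> * m - \<eta>^2 / 2) * T \<le> (\<nu> + \<eta> * \<bar>m\<bar> - \<eta>^2 / 2) * T"
      using pos by (intro mult_right_mono) (auto simp: algebra_simps)
    thus ?thesis unfolding A_def Amax_def using pos by simp
  qed
  have ew: "exp (- w \<rho>) * (1 + w \<rho> / 2) \<le> 1" if "\<rho> \<in> S" for \<rho>
  proof -
    have "1 + w \<rho> / 2 \<le> exp (w \<rho>)" using exp_ge_add_one_self[of "w \<rho>"] w0[OF that] by linarith
    hence "exp (- w \<rho>) * (1 + w \<rho> / 2) \<le> exp (- w \<rho>) * exp (w \<rho>)" by (intro mult_left_mono) auto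
    thus ?thesis by (simp add: exp_minus)
  qed
  have ew2: "exp (- w \<rho>) \<le> 1" if "\<rho> \<in> S" for \<rho> using w0[OF that] by simp
  have dB: "\<bar>d \<rho>\<bar> \<le> K * Amax" if "\<rho> \<in> S" for \<rho>
  proof -
    have "d \<rho> = (K * A \<rho>) * (exp (- w \<rho>) * (1 + w \<rho> / 2))" using d_eq[OF that] by simp
    also have "\<dots> \<le> (K * A \<rho>) * 1" using ew[OF that] K0 A0[of \<rho>] by (intro mult_left_mono) auto
    also have "\<dots> \<le> K * Amax" using Ale[OF that] K0 by simp
    finally show ?thesis using dpos[OF that] by simp
  qed
  have bB: "\<bar>b \<rho>\<bar> \<le> K * Amax * (ee - 1)" if "\<rho> \<in> S" for \<rho>
  proof -
    have "b \<rho> = (K * A \<rho> * (ee - 1)) * exp (- w \<rho>)" using b_eq[OF that] by simp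
    also have "\<dots> \<le> (K * A \<rho> * (ee - 1)) * 1" using ew2[OF that] K0 A0[of \<rho>] ee1
      by (intro mult_left_mono) auto
    also have "\<dots> \<le> K * Amax * (ee - 1)" using Ale[OF that] K0 ee1 by simp
    finally show ?thesis using bpos[OF that] by simp
  qed
  have aB: "\<bar>a \<rho>\<bar> \<le> K * Amax * (ee - 1)" if "\<rho> \<in> S" for \<rho>
    using ineq[OF that] bB[OF that] by simp
  have gB: "\<bar>g \<rho>\<bar> \<le> K * Amax + K * Amax * (ee - 1)" if "\<rho> \<in> S" for \<rho>
    using dB[OF that] bB[OF that] unfolding g_def by simp
  have bnd: "bounded (f ` S)" if "\<And>\<rho>. \<rho> \<in> S \<Longrightarrow> \<bar>f \<rho>\<bar> \<le> B" for f :: "real \<Rightarrow> real" and B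
    unfolding bounded_real using that by blast

  have openS: "open S" unfolding S_def by simp
  define th' where "th' = (\<lambda>\<rho>::real. lam * \<gamma> * (- (2 * \<rho>)))"
  define A' where "A' = (\<lambda>\<rho>. A \<rho> * (- (\<eta> * m * T)))"
  define X' where "X' = (\<lambda>\<rho>. A' \<rho> * \<theta> \<rho> + th' \<rho> * A \<rho>)"
  define w' where "w' = (\<lambda>\<rho>. inverse ((1 + w \<rho>) * exp (w \<rho>)) * X' \<rho>)"
  have thd: "(\<theta> has_real_derivative th' \<rho>) (at \<rho>)" for \<rho>
    unfolding \<theta>_def th'_def by (auto intro!: derivative_eq_intros)
  have Ad: "(A has_real_derivative A' \<rho>) (at \<rho>)" for \<rho>
    unfolding A_def A'_def by (auto intro!: derivative_eq_intros simp: algebra_simps)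
  have Xd: "(X has_real_derivative X' \<rho>) (at \<rho>)" for \<rho>
    unfolding X_def X'_def by (rule DERIV_mult[OF Ad thd])
  have wfun: "w = (\<lambda>\<rho>. lambertW (X \<rho>))" using w_eq by auto
  have wd: "(w has_real_derivative w' \<rho>) (at \<rho>)" if "\<rho> \<in> S" for \<rho>
  proof -
    have "((\<lambda>\<rho>. lambertW (X \<rho>)) has_real_derivative
        inverse ((1 + lambertW (X \<rho>)) * exp (lambertW (X \<rho>))) * X' \<rho>) (at \<rho>)"
      by (rule DERIV_chain2[OF lambertW_deriv[OF X0[OF that]] Xd])
    thus ?thesis unfolding w'_def using w_eq wfun by simp
  qed
  have contX: "continuous_on S X" unfolding X_def A_def \<theta>_def by (intro continuous_intros)
  have contw: "continuous_on S w"
    unfolding wfun by (rule continuous_on_compose2[OF lambertW_cont contX]) (use X0 in auto)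
  have contth: "continuous_on S \<theta>" unfolding \<theta>_def by (intro continuous_intros)
  have contth': "continuous_on S th'" unfolding th'_def by (intro continuous_intros)
  have contA: "continuous_on S A" unfolding A_def by (intro continuous_intros)
  have contA': "continuous_on S A'" unfolding A'_def by (intro continuous_intros contA)
  have contX': "continuous_on S X'" unfolding X'_def by (intro continuous_intros contA contA' contth contth')
  have wne: "(1 + w \<rho>) * exp (w \<rho>) \<noteq> 0" if "\<rho> \<in> S" for \<rho>
  proof -
    have "1 + w \<rho> > 0" using w0[OF that] by simp
    thus ?thesis by simp
  qed
  have contw': "continuous_on S w'" unfolding w'_def
    by (intro continuous_intros contw contX') (use wne in auto)
  define u' where "u' = (\<lambda>\<rho>. w' \<rho> * (1 + w \<rho> / 2) + (0 + w' \<rho> / 2) * w \<rho>)"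
  have ud: "((\<lambda>\<rho>. w \<rho> * (1 + w \<rho> / 2)) has_real_derivative u' \<rho>) (at \<rho>)" if "\<rho> \<in> S" for \<rho>
    unfolding u'_def by (intro DERIV_mult wd[OF that] DERIV_add DERIV_const DERIV_cdivide)
  have contu': "continuous_on S u'" unfolding u'_def by (intro continuous_intros contw contw') auto
  define Kb where "Kb = C * (ee - 1) / (\<eta>^2 * T)"
  have dfun: "d = (\<lambda>\<rho>. (K * (w \<rho> * (1 + w \<rho> / 2))) / \<theta> \<rho>)"
  proof
    fix \<rho> show "d \<rho> = (K * (w \<rho> * (1 + w \<rho> / 2))) / \<theta> \<rho>"
      unfolding d_def K_def C_def using pos by (cases "\<theta> \<rho> = 0") (simp_all add: field_simps)
  qed
  have bfun: "b = (\<lambda>\<rho>. (Kb * w \<rho>) / \<theta> \<rho>)"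
  proof
    fix \<rho> show "b \<rho> = (Kb * w \<rho>) / \<theta> \<rho>"
      unfolding b_def Kb_def C_def ee_def using pos by (cases "\<theta> \<rho> = 0") (simp_all add: field_simps)
  qed
  define d' where "d' = (\<lambda>\<rho>. (K * u' \<rho> * \<theta> \<rho> - K * (w \<rho> * (1 + w \<rho> / 2)) * th' \<rho>) / (\<theta> \<rho> * \<theta> \<rho>))"
  define b' where "b' = (\<lambda>\<rho>. (Kb * w' \<rho> * \<theta> \<rho> - Kb * w \<rho> * th' \<rho>) / (\<theta> \<rho> * \<theta> \<rho>))"
  have dd: "(d has_real_derivative d' \<rho>) (at \<rho>)" if "\<rho> \<in> S" for \<rho>
    unfolding dfun d'_def
    by (rule DERIV_divide[OF DERIV_cmult[OF ud[OF that]] thd]) (use th0[OF that] in simp)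
  have bd: "(b has_real_derivative b' \<rho>) (at \<rho>)" if "\<rho> \<in> S" for \<rho>
    unfolding bfun b'_def
    by (rule DERIV_divide[OF DERIV_cmult[OF wd[OF that]] thd]) (use th0[OF that] in simp)
  have thne: "\<theta> \<rho> * \<theta> \<rho> \<noteq> 0" if "\<rho> \<in> S" for \<rho> using th0[OF that] by simp
  have thne2: "\<theta> \<rho> \<noteq> 0" if "\<rho> \<in> S" for \<rho> using th0[OF that] by simp
  have contd': "continuous_on S d'" unfolding d'_def
    by (intro continuous_intros contw contu' contth contth') (auto simp: thne thne2)
  have contb': "continuous_on S b'" unfolding b'_def
    by (intro continuous_intros contw contw' contth contth') (auto simp: thne thne2)
  have gd: "(g has_real_derivative d' \<rho> + b' \<rho>) (at \<rho>)" if "\<rho> \<in> S" for \<rho>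
  proof -
    have "((\<lambda>\<rho>. d \<rho> + b \<rho>) has_real_derivative d' \<rho> + b' \<rho>) (at \<rho>)"
      by (rule DERIV_add[OF dd[OF that] bd[OF that]])
    thus ?thesis unfolding g_def .
  qed
  have C1d: "d C1_differentiable_on S" by (rule C1_of_deriv[OF dd contd'])
  have C1g: "g C1_differentiable_on S"
  proof (rule C1_of_deriv[of S g "\<lambda>\<rho>. d' \<rho> + b' \<rho>"])
    show "continuous_on S (\<lambda>\<rho>. d' \<rho> + b' \<rho>)" by (intro continuous_intros contd' contb')
  qed (rule gd)

  have LL': "(d \<longlongrightarrow> lam * exp (- r * T) * s0 * exp ((\<nu> - \<eta> * ((\<mu> - r) / \<sigma>) - \<eta>^2 / 2) * T)) (at_left 1)
    \<and> (g \<longlongrightarrow> lam * exp (- r * T) * s0 * exp ((\<nu> - \<eta> * ((\<mu> - r) / \<sigma>)) * T)) (at_left 1)"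
    using LL unfolding KA1e by (simp only: KA1)
  have LR': "(d \<longlongrightarrow> lam * exp (- r * T) * s0 * exp ((\<nu> + \<eta> * ((\<mu> - r) / \<sigma>) - \<eta>^2 / 2) * T)) (at_right (-1))
    \<and> (g \<longlongrightarrow> lam * exp (- r * T) * s0 * exp ((\<nu> + \<eta> * ((\<mu> - r) / \<sigma>)) * T)) (at_right (-1))"
    using LR unfolding KAm1e by (simp only: KAm1)
  show ?thesis
    unfolding S_def[symmetric] e2_def[symmetric]
    using C1d C1g dpos gpos LL' LR' ineq
      bnd[of a, OF aB] bnd[of b, OF bB] bnd[of d, OF dB] bnd[of g, OF gB]
    by auto
qed

end
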